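(* Let $\tilde F:\mathbb{R}\to\mathbb{R}$ be continuous in a neighborhood of $x_0\in\mathbb{R}$ and point-Lipschitz at $x_0$. Then the differential equation $\dot x=\tilde F(x)$ with initial condition $x(0)=x_0$ has a unique solution.
   Context: $\tilde F$ is point-Lipschitz at $x_0$ if there exist a neighborhood $\mathcal{U}$ of $x_0$ and $L\ge 0$ such that $|\tilde F(x)-\tilde F(x_0)|\le L|x-x_0|$ for all $x\in\mathcal{U}$. *)

theory Defs
  imports "HOL-Analysis.Analysis"
begin

definition point_Lipschitz :: "(real \<Rightarrow> real) \<Rightarrow> real \<Rightarrow> bool" where
  "point_Lipschitz F x0 \<longleftrightarrow>
     (\<exists>U L. open U \<and> x0 \<in> U \<and> L \<ge> 0 \<and> (\<forall>x\<in>U. \<bar>F x - F x0\<bar> \<le> L * \<bar>x - x0\<bar>))"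

definition is_solution_on :: "(real \<Rightarrow> real) \<Rightarrow> real \<Rightarrow> real set \<Rightarrow> (real \<Rightarrow> real) \<Rightarrow> bool" where
  "is_solution_on F x0 I x \<longleftrightarrow>
     0 \<in> I \<and> x 0 = x0 \<and> (\<forall>t\<in>I. (x has_real_derivative F (x t)) (at t))"

end

theory Submission
  imports Defs "HOL-Complex_Analysis.Conformal_Mappings"
begin

lemma clopen_interval:
  fixes I A :: "real set"
  assumes "is_interval I" "A \<subseteq> I" "t0 \<in> A" "closedin (top_of_set I) A"
    and "\<And>t. t \<in> A \<Longrightarrow> \<exists>e>0. ball t e \<subseteq> A"
  shows "A = I"
proof -
  have "connected I" using assms(1) is_interval_connected by blast
  moreover have "open A" using assms(5) open_contains_ball by blast
  then have "openin (top_of_set I) A" using assms(2) open_subset by blast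
  ultimately show ?thesis using assms(3,4) connected_clopen by blast
qed

lemma sol_cont:
  assumes "is_solution_on F x0 I y"
  shows "continuous_on I y"
proof -
  have "\<And>t. t \<in> I \<Longrightarrow> (y has_field_derivative F (y t)) (at t within I)"
    using assms unfolding is_solution_on_def by (blast intro: has_field_derivative_at_within)
  then show ?thesis by (rule DERIV_continuous_on)
qed

lemma zero_case_unique:
  fixes F :: "real \<Rightarrow> real"
  assumes U: "open U" "x0 \<in> U" and L: "L \<ge> 0" and LU: "\<forall>x\<in>U. \<bar>F x - F x0\<bar> \<le> L * \<bar>x - x0\<bar>"
    and F0: "F x0 = 0"
    and I: "is_interval I" "open I" and sol: "is_solution_on F x0 I y"
  shows "\<forall>t\<in>I. y t = x0"
proof -
  define A where "A = {t\<in>I. y t = x0}"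
  have der: "\<And>t. t \<in> I \<Longrightarrow> (y has_real_derivative F (y t)) (at t)"
    using sol unfolding is_solution_on_def by blast
  have "A = I"
  proof (rule clopen_interval[OF I(1)])
    show "A \<subseteq> I" unfolding A_def by blast
    show "0 \<in> A" using sol unfolding A_def is_solution_on_def by simp
    show "closedin (top_of_set I) A" unfolding A_def
      by (rule continuous_closedin_preimage_constant[OF sol_cont[OF sol]])
  next
    fix t assume tA: "t \<in> A"
    then have tI: "t \<in> I" and yt: "y t = x0" unfolding A_def by auto
    obtain e1 where e1: "e1 > 0" "ball x0 e1 \<subseteq> U" using U open_contains_ball by blast
    obtain e2 where e2: "e2 > 0" "ball t e2 \<subseteq> I" using I(2) tI open_contains_ball by blast
    have "isCont y t" using der[OF tI] DERIV_isCont by blast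
    then obtain d where d: "d > 0" "\<And>s. dist s t < d \<Longrightarrow> dist (y s) (y t) < e1"
      using e1(1) unfolding continuous_at_eps_delta by blast
    define \<epsilon> where "\<epsilon> = min (min d e2 / 2) (1 / (2 * L + 2))"
    have \<epsilon>: "\<epsilon> > 0" using d e2 L unfolding \<epsilon>_def by auto
    have \<epsilon>L: "\<epsilon> * L \<le> 1/2"
    proof -
      have "\<epsilon> \<le> 1 / (2 * L + 2)" unfolding \<epsilon>_def by linarith
      then have "\<epsilon> * (2 * L + 2) \<le> 1" using L by (simp add: field_simps)
      then show ?thesis using L \<epsilon> by (simp add: field_simps)
    qed
    have "\<epsilon> < e2" using d e2 unfolding \<epsilon>_def by linarith
    then have "cball t \<epsilon> \<subseteq> ball t e2" by (intro subsetI) (simp add: dist_commute)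
    then have cI: "cball t \<epsilon> \<subseteq> I" using e2 by blast
    have cU: "\<And>s. s \<in> cball t \<epsilon> \<Longrightarrow> y s \<in> U"
    proof -
      fix s assume "s \<in> cball t \<epsilon>"
      moreover have "\<epsilon> < d" using d e2 unfolding \<epsilon>_def by linarith
      ultimately have "dist s t < d" by (simp add: dist_commute)
      then have "dist (y s) x0 < e1" using d yt by auto
      then show "y s \<in> U" using e1 by (auto simp: dist_commute)
    qed
    have cont: "continuous_on (cball t \<epsilon>) (\<lambda>s. \<bar>y s - x0\<bar>)"
      using continuous_on_subset[OF sol_cont[OF sol] cI]
      by (intro continuous_intros)
    obtain s where s: "s \<in> cball t \<epsilon>" and smax: "\<And>u. u \<in> cball t \<epsilon> \<Longrightarrow> \<bar>y u - x0\<bar> \<le> \<bar>y s - x0\<bar>"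
      using continuous_attains_sup[OF compact_cball _ cont] \<epsilon>
      by (metis centre_in_cball less_imp_le empty_iff)
    define M where "M = \<bar>y s - x0\<bar>"
    have bnd: "\<And>z. z \<in> cball t \<epsilon> \<Longrightarrow> \<bar>F (y z)\<bar> \<le> L * M"
    proof -
      fix z assume z: "z \<in> cball t \<epsilon>"
      have "\<bar>F (y z)\<bar> = \<bar>F (y z) - F x0\<bar>" using F0 by simp
      also have "\<dots> \<le> L * \<bar>y z - x0\<bar>" using LU cU[OF z] by blast
      also have "\<dots> \<le> L * M" using smax[OF z] L unfolding M_def by (simp add: mult_left_mono)
      finally show "\<bar>F (y z)\<bar> \<le> L * M" .
    qed
    have "\<exists>z\<in>cball t \<epsilon>. \<bar>y s - y t\<bar> = \<bar>s - t\<bar> * \<bar>F (y z)\<bar>"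
    proof (cases "s = t")
      case True then show ?thesis using \<epsilon> by (intro bexI[of _ t]) auto
    next
      case False
      show ?thesis
      proof (cases "s < t")
        case True
        have "\<exists>z. s < z \<and> z < t \<and> y t - y s = (t - s) * F (y z)"
        proof (rule MVT2[OF True])
          fix x assume "s \<le> x" "x \<le> t"
          then have "x \<in> cball t \<epsilon>" using s by (simp add: dist_real_def)
          then show "(y has_real_derivative F (y x)) (at x)" using der cI by blast
        qed
        then obtain z where "s < z" "z < t" "y t - y s = (t - s) * F (y z)" by blast
        moreover have "z \<in> cball t \<epsilon>" using s \<open>s < z\<close> \<open>z < t\<close> by (simp add: dist_real_def)
        moreover have "\<bar>y s - y t\<bar> = \<bar>s - t\<bar> * \<bar>F (y z)\<bar>"
        proof -
          have "\<bar>y s - y t\<bar> = \<bar>y t - y s\<bar>" by (rule abs_minus_commute)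
          also have "\<dots> = \<bar>t - s\<bar> * \<bar>F (y z)\<bar>" using \<open>y t - y s = _\<close> by (simp add: abs_mult)
          also have "\<bar>t - s\<bar> = \<bar>s - t\<bar>" by (rule abs_minus_commute)
          finally show ?thesis .
        qed
        ultimately show ?thesis by blast
      next
        case False
        then have ts: "t < s" using \<open>s \<noteq> t\<close> by auto
        have "\<exists>z. t < z \<and> z < s \<and> y s - y t = (s - t) * F (y z)"
        proof (rule MVT2[OF ts])
          fix x assume "t \<le> x" "x \<le> s"
          then have "x \<in> cball t \<epsilon>" using s by (simp add: dist_real_def)
          then show "(y has_real_derivative F (y x)) (at x)" using der cI by blast
        qed
        then obtain z where "t < z" "z < s" "y s - y t = (s - t) * F (y z)" by blast
        moreover have "z \<in> cball t \<epsilon>" using s \<open>t < z\<close> \<open>z < s\<close> by (simp add: dist_real_def)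
        moreover have "\<bar>y s - y t\<bar> = \<bar>s - t\<bar> * \<bar>F (y z)\<bar>" using \<open>y s - y t = _\<close> by (simp add: abs_mult)
        ultimately show ?thesis by blast
      qed
    qed
    then obtain z where z: "z \<in> cball t \<epsilon>" and eq: "M = \<bar>s - t\<bar> * \<bar>F (y z)\<bar>"
      unfolding M_def using yt by auto
    have "\<bar>s - t\<bar> \<le> \<epsilon>" using s by (simp add: dist_real_def)
    then have "M \<le> \<epsilon> * (L * M)" using eq bnd[OF z] \<epsilon>
      by (simp add: mult_mono)
    also have "\<dots> = (\<epsilon> * L) * M" by simp
    also have "\<dots> \<le> (1/2) * M" using \<epsilon>L M_def
      by (intro mult_right_mono) auto
    finally have M0: "M = 0" unfolding M_def by simp
    have "ball t \<epsilon> \<subseteq> A"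
    proof
      fix u assume "u \<in> ball t \<epsilon>"
      then have u: "u \<in> cball t \<epsilon>" by auto
      have "\<bar>y u - x0\<bar> \<le> 0" using smax[OF u] M0 unfolding M_def by simp
      moreover have "u \<in> I" using u cI by blast
      ultimately show "u \<in> A" unfolding A_def by simp
    qed
    then show "\<exists>e>0. ball t e \<subseteq> A" using \<epsilon> by blast
  qed
  then show ?thesis unfolding A_def by blast
qed

lemma nonzero_case:
  fixes F :: "real \<Rightarrow> real"
  assumes U: "open U" "x0 \<in> U" and contF: "continuous_on U F" and Fx0: "F x0 \<noteq> 0"
  shows "\<exists>\<delta>>0. \<exists>x. is_solution_on F x0 {-\<delta><..<\<delta>} x \<and>
           (\<forall>I y. is_interval I \<and> open I \<and> I \<subseteq> {-\<delta><..<\<delta>} \<and> is_solution_on F x0 I y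
                  \<longrightarrow> (\<forall>t\<in>I. y t = x t))"
proof -
  have "isCont F x0" using contF U continuous_on_eq_continuous_at by blast
  moreover have "\<bar>F x0\<bar> > 0" using Fx0 by simp
  ultimately obtain d where d: "d > 0" "\<And>u. dist u x0 < d \<Longrightarrow> dist (F u) (F x0) < \<bar>F x0\<bar>"
    unfolding continuous_at_eps_delta by blast
  obtain e1 where e1: "e1 > 0" "ball x0 e1 \<subseteq> U" using U open_contains_ball by blast
  define r where "r = min d e1 / 2"
  have r: "r > 0" using d e1 by (simp add: r_def)
  define a where "a = x0 - r"
  define b where "b = x0 + r"
  have rd: "r < d" "r < e1" using d e1 unfolding r_def by linarith+
  have inU: "\<And>u. a \<le> u \<Longrightarrow> u \<le> b \<Longrightarrow> u \<in> U"
  proof -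
    fix u assume "a \<le> u" "u \<le> b"
    then have "dist x0 u < e1" using rd unfolding a_def b_def by (simp add: dist_real_def)
    then show "u \<in> U" using e1 by auto
  qed
  have abU: "{a..b} \<subseteq> U" using inU by auto
  have Fnear: "\<And>u. a \<le> u \<Longrightarrow> u \<le> b \<Longrightarrow> \<bar>F u - F x0\<bar> < \<bar>F x0\<bar>"
  proof -
    fix u assume "a \<le> u" "u \<le> b"
    then have "dist u x0 < d" using rd unfolding a_def b_def by (simp add: dist_real_def)
    then show "\<bar>F u - F x0\<bar> < \<bar>F x0\<bar>" using d(2) by (simp add: dist_real_def)
  qed
  have Fsign: "\<And>u. a \<le> u \<Longrightarrow> u \<le> b \<Longrightarrow> F u * F x0 > 0"
  proof -
    fix u assume "a \<le> u" "u \<le> b"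
    from Fnear[OF this] show "F u * F x0 > 0"
      by (cases "F x0 > 0") (auto simp: zero_less_mult_iff abs_if split: if_splits)
  qed
  have Fnz: "\<And>u. a \<le> u \<Longrightarrow> u \<le> b \<Longrightarrow> F u \<noteq> 0" using Fsign by fastforce
  define h where "h = (\<lambda>u. 1 / F u)"
  have conth: "continuous_on {a..b} h"
    unfolding h_def using continuous_on_subset[OF contF abU] Fnz
    by (intro continuous_intros) auto
  define G where "G = (\<lambda>x. integral {a..x} h - integral {a..x0} h)"
  have Gder_within: "(G has_real_derivative h x) (at x within {a..b})" if "x \<in> {a..b}" for x
  proof -
    have "((\<lambda>x. integral {a..x} h) has_real_derivative h x) (at x within {a..b})"
      by (rule integral_has_real_derivative[OF conth that])
    then have "((\<lambda>x. integral {a..x} h - integral {a..x0} h) has_real_derivative h x - 0) (at x within {a..b})"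
      by (intro DERIV_diff DERIV_const)
    then show ?thesis unfolding G_def by simp
  qed
  have contG: "continuous_on {a..b} G" using Gder_within by (rule DERIV_continuous_on)
  have Gder: "(G has_real_derivative h x) (at x)" if "a < x" "x < b" for x
  proof -
    have "at x within {a..b} = at x" by (rule at_within_Icc_at[OF that])
    then show ?thesis using Gder_within[of x] that by simp
  qed
  have G0: "G x0 = 0" by (simp add: G_def)
  have ax0: "a < x0" "x0 < b" using r unfolding a_def b_def by auto
  have mono: "(G x - G y) * F x0 < 0" if "a < x" "x < y" "y < b" for x y
  proof -
    have cxy: "continuous_on {x..y} G" by (rule continuous_on_subset[OF contG]) (use that in auto)
    show ?thesis
    proof (cases "F x0 > 0")
      case True
      have "G x < G y"
      proof (rule DERIV_pos_imp_increasing_open[OF \<open>x < y\<close> _ cxy])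
        fix z assume "x < z" "z < y"
        then have "F z * F x0 > 0" "a < z" "z < b" using Fsign[of z] that by auto
        then have "h z > 0" using True unfolding h_def by (simp add: zero_less_mult_iff)
        then show "\<exists>l. (G has_real_derivative l) (at z) \<and> l > 0" using Gder \<open>a < z\<close> \<open>z < b\<close> by blast
      qed
      then show ?thesis using True by (simp add: mult_neg_pos)
    next
      case False
      then have Fn: "F x0 < 0" using Fx0 by simp
      have "G x > G y"
      proof (rule DERIV_neg_imp_decreasing_open[OF \<open>x < y\<close> _ cxy])
        fix z assume "x < z" "z < y"
        then have "F z * F x0 > 0" "a < z" "z < b" using Fsign[of z] that by auto
        then have "h z < 0" using Fn unfolding h_def by (simp add: zero_less_mult_iff)
        then show "\<exists>l. (G has_real_derivative l) (at z) \<and> l < 0" using Gder \<open>a < z\<close> \<open>z < b\<close> by blast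
      qed
      then show ?thesis using Fn by (simp add: mult_pos_neg)
    qed
  qed
  have injG: "inj_on G {a<..<b}"
  proof (rule inj_onI)
    fix x y assume x: "x \<in> {a<..<b}" and y: "y \<in> {a<..<b}" and eq: "G x = G y"
    show "x = y"
    proof (rule ccontr)
      assume "x \<noteq> y"
      then consider "x < y" | "y < x" by linarith
      then show False
      proof cases
        case 1 then show False using mono[of x y] x y eq by auto
      next
        case 2 then show False using mono[of y x] x y eq by auto
      qed
    qed
  qed
  define p where "p = G (x0 + r/2)"
  define q where "q = G (x0 - r/2)"
  have "(G x0 - G (x0 + r/2)) * F x0 < 0" using mono[of x0 "x0 + r/2"] r unfolding a_def b_def by auto
  then have pF: "p * F x0 > 0" using G0 unfolding p_def by simp
  have "(G (x0 - r/2) - G x0) * F x0 < 0" using mono[of "x0 - r/2" x0] r unfolding a_def b_def by auto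
  then have qF: "q * F x0 < 0" using G0 unfolding q_def by simp
  have pq0: "p \<noteq> 0" "q \<noteq> 0" using pF qF by auto
  define \<delta> where "\<delta> = min \<bar>p\<bar> \<bar>q\<bar>"
  have \<delta>: "\<delta> > 0" using pq0 unfolding \<delta>_def by simp
  define g where "g = inv_into {a<..<b} G"
  have gG: "\<And>z. z \<in> {a<..<b} \<Longrightarrow> g (G z) = z" unfolding g_def using injG by (simp add: inv_into_f_f)
  have cG2: "continuous_on {x0 - r/2..x0 + r/2} G"
    by (rule continuous_on_subset[OF contG]) (use r in \<open>auto simp: a_def b_def\<close>)
  have surj: "\<exists>x. x0 - r/2 \<le> x \<and> x \<le> x0 + r/2 \<and> G x = t" if t: "\<bar>t\<bar> < \<delta>" for t
  proof (cases "F x0 > 0")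
    case True
    then have "q < 0" "p > 0" using pF qF by (auto simp: zero_less_mult_iff mult_less_0_iff)
    then have "G (x0 - r/2) \<le> t" "t \<le> G (x0 + r/2)" using t unfolding \<delta>_def p_def q_def by auto
    then show ?thesis using IVT'[of G "x0 - r/2" t "x0 + r/2", OF _ _ _ cG2] r by auto
  next
    case False
    then have Fn: "F x0 < 0" using Fx0 by simp
    then have "q > 0" "p < 0" using pF qF by (auto simp: zero_less_mult_iff mult_less_0_iff)
    then have "G (x0 + r/2) \<le> t" "t \<le> G (x0 - r/2)" using t unfolding \<delta>_def p_def q_def by auto
    then show ?thesis using IVT2'[of G "x0 + r/2" t "x0 - r/2", OF _ _ _ cG2] r by auto
  qed
  have contS: "continuous_on {a<..<b} G" using contG by (rule continuous_on_subset) auto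
  have gder: "(g has_real_derivative F (g t)) (at t)" if t: "\<bar>t\<bar> < \<delta>" for t
  proof -
    obtain x where x: "x0 - r/2 \<le> x" "x \<le> x0 + r/2" "G x = t" using surj[OF t] by blast
    have xab: "a < x" "x < b" using x r unfolding a_def b_def by auto
    have hx: "h x \<noteq> 0" using Fnz[of x] xab unfolding h_def by simp
    have "(g has_real_derivative inverse (h x)) (at (G x))"
      by (rule has_field_derivative_inverse_strong[OF Gder[OF xab] hx open_greaterThanLessThan _ contS gG])
        (use xab in auto)
    moreover have "g (G x) = x" using gG xab by simp
    ultimately show ?thesis using x(3) unfolding h_def by simp
  qed
  have g0: "g 0 = x0" using gG[of x0] ax0 G0 by simp
  have sol: "is_solution_on F x0 {-\<delta><..<\<delta>} g"
    unfolding is_solution_on_def using \<delta> g0 gder by (auto simp: abs_less_iff)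
  have uniq: "\<forall>t\<in>I. y t = g t"
    if I: "is_interval I" "open I" "I \<subseteq> {-\<delta><..<\<delta>}" and soly: "is_solution_on F x0 I y" for I y
  proof -
    have cy: "continuous_on I y" by (rule sol_cont[OF soly])
    have derY: "\<And>t. t \<in> I \<Longrightarrow> (y has_real_derivative F (y t)) (at t)"
      using soly unfolding is_solution_on_def by blast
    define C where "C = {x0 - r/2..x0 + r/2}"
    have Cab: "C \<subseteq> {a<..<b}" using r unfolding C_def a_def b_def by auto
    define A where "A = {t\<in>I. y t \<in> C \<and> G (y t) = t}"
    have "A = I"
    proof (rule clopen_interval[OF I(1)])
      show "A \<subseteq> I" unfolding A_def by blast
      show "0 \<in> A" using soly G0 r unfolding A_def C_def is_solution_on_def by simp
      define I' where "I' = I \<inter> y -` C"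
      have c1: "closedin (top_of_set I) I'" unfolding I'_def C_def
        by (rule continuous_closedin_preimage[OF cy closed_atLeastAtMost])
      have cy': "continuous_on I' y" using cy by (rule continuous_on_subset) (auto simp: I'_def)
      have "y ` I' \<subseteq> {a..b}" using Cab unfolding I'_def by auto
      then have "continuous_on I' (\<lambda>t. G (y t) - t)"
        by (intro continuous_on_diff continuous_on_compose2[OF contG cy'] continuous_on_id)
      then have c2: "closedin (top_of_set I') {t\<in>I'. G (y t) - t = 0}"
        by (rule continuous_closedin_preimage_constant)
      have "A = {t\<in>I'. G (y t) - t = 0}" unfolding A_def I'_def by auto
      then show "closedin (top_of_set I) A" using closedin_trans[OF c2 c1] by simp
    next
      fix t assume tA: "t \<in> A"
      then have tI: "t \<in> I" and ytC: "y t \<in> C" and Gyt: "G (y t) = t" unfolding A_def by auto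
      have "\<bar>t\<bar> < \<delta>" using I(3) tI by (auto simp: abs_less_iff)
      then have "y t \<noteq> x0 + r/2" "y t \<noteq> x0 - r/2" using Gyt unfolding \<delta>_def p_def q_def by auto
      then have yt: "x0 - r/2 < y t" "y t < x0 + r/2" using ytC unfolding C_def by auto
      define e where "e = min (y t - (x0 - r/2)) (x0 + r/2 - y t)"
      have e: "e > 0" using yt unfolding e_def by simp
      have "isCont y t" using derY[OF tI] DERIV_isCont by blast
      then obtain d1 where d1: "d1 > 0" "\<And>s. dist s t < d1 \<Longrightarrow> dist (y s) (y t) < e"
        using e unfolding continuous_at_eps_delta by blast
      obtain e2 where e2: "e2 > 0" "ball t e2 \<subseteq> I" using I(2) tI open_contains_ball by blast
      define \<epsilon> where "\<epsilon> = min d1 e2"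
      have \<epsilon>: "\<epsilon> > 0" using d1 e2 unfolding \<epsilon>_def by simp
      have sI: "s \<in> I" if "s \<in> ball t \<epsilon>" for s
        using that e2 unfolding \<epsilon>_def by (auto simp: dist_commute)
      have sC: "x0 - r/2 < y s \<and> y s < x0 + r/2" if "s \<in> ball t \<epsilon>" for s
      proof -
        have "dist s t < d1" using that unfolding \<epsilon>_def by (simp add: dist_commute)
        then have "\<bar>y s - y t\<bar> < e" using d1(2) by (simp add: dist_real_def)
        then show ?thesis unfolding e_def by (simp add: abs_less_iff)
      qed
      have dz: "((\<lambda>s. G (y s) - s) has_real_derivative 0) (at s within ball t \<epsilon>)" if s: "s \<in> ball t \<epsilon>" for s
      proof -
        have ys: "a < y s" "y s < b" using sC[OF s] r unfolding a_def b_def by auto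
        have "((\<lambda>s. G (y s)) has_real_derivative h (y s) * F (y s)) (at s)"
          by (rule DERIV_chain2[OF Gder[OF ys] derY[OF sI[OF s]]])
        moreover have "h (y s) * F (y s) = 1" using Fnz[of "y s"] ys unfolding h_def by simp
        ultimately have "((\<lambda>s. G (y s)) has_real_derivative 1) (at s)" by simp
        then have "((\<lambda>s. G (y s) - s) has_real_derivative 1 - 1) (at s)"
          by (intro DERIV_diff DERIV_ident)
        then show ?thesis by (simp add: has_field_derivative_at_within)
      qed
      obtain c where c: "\<forall>s\<in>ball t \<epsilon>. G (y s) - s = c"
        using has_field_derivative_zero_constant[OF convex_ball dz] by blast
      have "c = 0" using c Gyt \<epsilon> by (metis centre_in_ball diff_self)
      then have "ball t \<epsilon> \<subseteq> A" using c sI sC unfolding A_def C_def by fastforce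
      then show "\<exists>e>0. ball t e \<subseteq> A" using \<epsilon> by blast
    qed
    show ?thesis
    proof
      fix t assume "t \<in> I"
      then have "t \<in> A" using \<open>A = I\<close> by simp
      then have "y t \<in> C" "G (y t) = t" unfolding A_def by auto
      then have "g (G (y t)) = y t" using gG Cab by blast
      then have "g t = y t" using \<open>G (y t) = t\<close> by simp
      then show "y t = g t" by simp
    qed
  qed
  show ?thesis using \<delta> sol uniq by blast
qed

theorem corollary4p4:
  fixes F :: "real \<Rightarrow> real" and x0 :: real
  assumes "\<exists>U. open U \<and> x0 \<in> U \<and> continuous_on U F"
    and "point_Lipschitz F x0"
  shows "\<exists>\<delta>>0. \<exists>x. is_solution_on F x0 {-\<delta><..<\<delta>} x \<and>
           (\<forall>I y. is_interval I \<and> open I \<and> I \<subseteq> {-\<delta><..<\<delta>} \<and> is_solution_on F x0 I y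
                  \<longrightarrow> (\<forall>t\<in>I. y t = x t))"
proof (cases "F x0 = 0")
  case True
  obtain V L where V: "open V" "x0 \<in> V" "L \<ge> 0" "\<forall>x\<in>V. \<bar>F x - F x0\<bar> \<le> L * \<bar>x - x0\<bar>"
    using assms(2) unfolding point_Lipschitz_def by blast
  have sol: "is_solution_on F x0 {-1<..<1} (\<lambda>_. x0)"
    unfolding is_solution_on_def using True by (simp add: DERIV_const)
  have "\<forall>I y. is_interval I \<and> open I \<and> I \<subseteq> {-1<..<1} \<and> is_solution_on F x0 I y
                  \<longrightarrow> (\<forall>t\<in>I. y t = x0)"
    using zero_case_unique[OF V True] by blast
  then show ?thesis using sol by (intro exI[of _ "1::real"]) auto
next
  case False
  obtain U where "open U" "x0 \<in> U" "continuous_on U F" using assms(1) by blast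
  then show ?thesis using nonzero_case False by blast
qed

end
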